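(* For $n\geq 3$, the group $\Gamma_2(VP_n)/\Gamma_3(VP_n)$ is a free abelian group of rank $n(n-1)(2n-3)/2$.
   Context: The virtual pure braid group $VP_n$ is the group with generators $\lambda_{k,l}$, $1\le k\neq l\le n$, and defining relations $\lambda_{i,j}\lambda_{k,l}=\lambda_{k,l}\lambda_{i,j}$ and $\lambda_{k,i}\lambda_{k,j}\lambda_{i,j}=\lambda_{i,j}\lambda_{k,j}\lambda_{k,i}$, where distinct letters stand for distinct indices. (Equivalently, it is the kernel of the homomorphism from the virtual braid group $VB_n$ to $S_n$ sending both $\sigma_i$ and $\rho_i$ to the transposition $(i\ i{+}1)$.) For a group $G$, $\Gamma_1(G)=G$, $\Gamma_i(G)=[\Gamma_{i-1}(G),G]$. *)

theory Defs
  imports "HOL-Algebra.Algebra"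
begin

text \<open>Words in the generators lambda_{k,l}: a letter is ((k,l), b) where b = True
  stands for lambda_{k,l} and b = False for its inverse.\<close>

type_synonym vp_letter = "(nat \<times> nat) \<times> bool"

definition vp_gen :: "nat \<Rightarrow> nat \<times> nat \<Rightarrow> bool" where
  "vp_gen n g \<longleftrightarrow> 1 \<le> fst g \<and> fst g \<le> n \<and> 1 \<le> snd g \<and> snd g \<le> n \<and> fst g \<noteq> snd g"

definition vp_word :: "nat \<Rightarrow> vp_letter list \<Rightarrow> bool" where
  "vp_word n w \<longleftrightarrow> (\<forall>x \<in> set w. vp_gen n (fst x))"

definition vp_relator :: "nat \<Rightarrow> vp_letter list \<Rightarrow> bool" where
  "vp_relator n r \<longleftrightarrow>
    (\<exists>i j k l. distinct [i, j, k, l] \<and> {i, j, k, l} \<subseteq> {1..n} \<and>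
       r = [((i,j),True), ((k,l),True), ((i,j),False), ((k,l),False)]) \<or>
    (\<exists>i j k. distinct [i, j, k] \<and> {i, j, k} \<subseteq> {1..n} \<and>
       r = [((k,i),True), ((k,j),True), ((i,j),True),
            ((k,i),False), ((k,j),False), ((i,j),False)])"

inductive vp_rel :: "nat \<Rightarrow> vp_letter list \<Rightarrow> vp_letter list \<Rightarrow> bool" for n where
  refl: "vp_rel n w w"
| sym: "vp_rel n u v \<Longrightarrow> vp_rel n v u"
| trans: "vp_rel n u v \<Longrightarrow> vp_rel n v w \<Longrightarrow> vp_rel n u w"
| cancel: "vp_gen n g \<Longrightarrow> vp_rel n (u @ [(g, b), (g, \<not> b)] @ v) (u @ v)"
| relator: "vp_relator n r \<Longrightarrow> vp_rel n (u @ r @ v) (u @ v)"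

definition vp_equiv :: "nat \<Rightarrow> (vp_letter list \<times> vp_letter list) set" where
  "vp_equiv n = {(x, y). vp_word n x \<and> vp_word n y \<and> vp_rel n x y}"

definition VP :: "nat \<Rightarrow> vp_letter list set monoid" where
  "VP n = \<lparr> carrier = {w. vp_word n w} // vp_equiv n,
            monoid.mult = (\<lambda>A B. vp_equiv n `` {x @ y | x y. x \<in> A \<and> y \<in> B}),
            one = vp_equiv n `` {[]} \<rparr>"

text \<open>Lower central series: Gamma_1 = G, Gamma_(i+1) = [Gamma_i, G]
  (Gamma_0 is also set to G, which is irrelevant).\<close>
fun lower_central :: "('a, 'b) monoid_scheme \<Rightarrow> nat \<Rightarrow> 'a set" where
  "lower_central G 0 = carrier G"
| "lower_central G (Suc i) =
     (if i = 0 then carrier G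
      else generate G {inv\<^bsub>G\<^esub> x \<otimes>\<^bsub>G\<^esub> inv\<^bsub>G\<^esub> y \<otimes>\<^bsub>G\<^esub> x \<otimes>\<^bsub>G\<^esub> y
                       | x y. x \<in> lower_central G i \<and> y \<in> carrier G})"

end

theory Submission
  imports Defs "HOL-Library.Function_Algebras"
begin


lemma vp_rel_append:
  assumes "vp_rel n u v" shows "vp_rel n (x @ u @ y) (x @ v @ y)"
  using assms
proof (induction rule: vp_rel.induct)
  case (refl w) then show ?case by (rule vp_rel.refl)
next
  case (sym u v) then show ?case by (metis vp_rel.sym)
next
  case (trans u v w) then show ?case by (metis vp_rel.trans)
next
  case (cancel g u b v)
  have "vp_rel n ((x @ u) @ [(g, b), (g, \<not> b)] @ (v @ y)) ((x @ u) @ (v @ y))"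
    by (rule vp_rel.cancel[OF cancel])
  then show ?case by simp
next
  case (relator r u v)
  have "vp_rel n ((x @ u) @ r @ (v @ y)) ((x @ u) @ (v @ y))"
    by (rule vp_rel.relator[OF relator])
  then show ?case by simp
qed

lemma vp_rel_app2:
  assumes "vp_rel n u u'" "vp_rel n v v'" shows "vp_rel n (u @ v) (u' @ v')"
proof -
  have "vp_rel n ([] @ u @ v) ([] @ u' @ v)" by (rule vp_rel_append[OF assms(1)])
  moreover have "vp_rel n (u' @ v @ []) (u' @ v' @ [])" by (rule vp_rel_append[OF assms(2)])
  ultimately show ?thesis by (metis vp_rel.trans append_Nil append_Nil2)
qed

lemma vp_word_append [simp]: "vp_word n (u @ v) \<longleftrightarrow> vp_word n u \<and> vp_word n v"
  by (auto simp: vp_word_def)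

lemma vp_word_Nil [simp]: "vp_word n []"
  by (auto simp: vp_word_def)

lemma vp_word_Cons [simp]: "vp_word n (x # v) \<longleftrightarrow> vp_gen n (fst x) \<and> vp_word n v"
  by (auto simp: vp_word_def)

lemma equiv_vp: "equiv {w. vp_word n w} (vp_equiv n)"
  unfolding equiv_def refl_on_def sym_def trans_def vp_equiv_def
  by (auto intro: vp_rel.refl vp_rel.sym vp_rel.trans)

definition cls :: "nat \<Rightarrow> vp_letter list \<Rightarrow> vp_letter list set" where
  "cls n w = vp_equiv n `` {w}"

lemma cls_in_carrier: "vp_word n w \<Longrightarrow> cls n w \<in> carrier (VP n)"
  unfolding cls_def VP_def by (auto intro: quotientI)

lemma carrier_VP_E:
  assumes "A \<in> carrier (VP n)" obtains w where "vp_word n w" "A = cls n w"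
  using assms unfolding cls_def VP_def by (auto elim: quotientE)

lemma cls_eq_iff: "vp_word n u \<Longrightarrow> vp_word n v \<Longrightarrow> cls n u = cls n v \<longleftrightarrow> vp_rel n u v"
  unfolding cls_def
  using equiv_class_eq_iff[OF equiv_vp, of u v n] by (auto simp: vp_equiv_def)

lemma mem_cls: "x \<in> cls n w \<longleftrightarrow> (vp_word n w \<and> vp_word n x \<and> vp_rel n w x)"
  unfolding cls_def vp_equiv_def by auto

lemma cls_eqI: "vp_word n u \<Longrightarrow> vp_word n v \<Longrightarrow> vp_rel n u v \<Longrightarrow> cls n u = cls n v"
  using cls_eq_iff by blast

lemma mult_cls:
  assumes "vp_word n u" "vp_word n v"
  shows "cls n u \<otimes>\<^bsub>VP n\<^esub> cls n v = cls n (u @ v)"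
proof -
  let ?S = "{x @ y |x y. x \<in> cls n u \<and> y \<in> cls n v}"
  have "vp_equiv n `` ?S = cls n (u @ v)"
  proof
    show "vp_equiv n `` ?S \<subseteq> cls n (u @ v)"
    proof
      fix z assume "z \<in> vp_equiv n `` ?S"
      then obtain x y where xy: "x \<in> cls n u" "y \<in> cls n v" "(x @ y, z) \<in> vp_equiv n"
        by auto
      then have "vp_rel n (u @ v) (x @ y)" using vp_rel_app2 by (auto simp: mem_cls)
      with xy show "z \<in> cls n (u @ v)"
        by (auto simp: mem_cls vp_equiv_def intro: vp_rel.trans)
    qed
  next
    have "u @ v \<in> ?S" using assms by (auto simp: mem_cls intro: vp_rel.refl)
    then show "cls n (u @ v) \<subseteq> vp_equiv n `` ?S"
      unfolding cls_def by auto
  qed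
  then show ?thesis by (simp add: VP_def)
qed

lemma one_VP: "\<one>\<^bsub>VP n\<^esub> = cls n []"
  by (simp add: VP_def cls_def)

definition winv :: "vp_letter list \<Rightarrow> vp_letter list" where
  "winv w = rev (map (\<lambda>(g, b). (g, \<not> b)) w)"

lemma winv_word: "vp_word n w \<Longrightarrow> vp_word n (winv w)"
  by (auto simp: winv_def vp_word_def)

lemma winv_rel: "vp_word n w \<Longrightarrow> vp_rel n (winv w @ w) []"
proof (induction w)
  case Nil then show ?case by (simp add: winv_def vp_rel.refl)
next
  case (Cons l w)
  obtain g b where l: "l = (g, b)" by (cases l) auto
  have g: "vp_gen n g" using Cons.prems l by simp
  have "winv (l # w) @ l # w = winv w @ [(g, \<not> b), (g, \<not> \<not> b)] @ w"
    by (simp add: winv_def l)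
  moreover have "vp_rel n (winv w @ [(g, \<not> b), (g, \<not> \<not> b)] @ w) (winv w @ w)"
    by (rule vp_rel.cancel[OF g])
  ultimately show ?case using Cons by (metis vp_rel.trans vp_word_Cons)
qed

lemma group_VP: "group (VP n)"
proof (rule groupI)
  fix x y assume "x \<in> carrier (VP n)" "y \<in> carrier (VP n)"
  then show "x \<otimes>\<^bsub>VP n\<^esub> y \<in> carrier (VP n)"
    by (metis carrier_VP_E mult_cls cls_in_carrier vp_word_append)
next
  show "\<one>\<^bsub>VP n\<^esub> \<in> carrier (VP n)" by (simp add: one_VP cls_in_carrier)
next
  fix x y z assume "x \<in> carrier (VP n)" "y \<in> carrier (VP n)" "z \<in> carrier (VP n)"
  then show "x \<otimes>\<^bsub>VP n\<^esub> y \<otimes>\<^bsub>VP n\<^esub> z = x \<otimes>\<^bsub>VP n\<^esub> (y \<otimes>\<^bsub>VP n\<^esub> z)"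
    by (elim carrier_VP_E) (simp add: mult_cls)
next
  fix x assume "x \<in> carrier (VP n)"
  then show "\<one>\<^bsub>VP n\<^esub> \<otimes>\<^bsub>VP n\<^esub> x = x"
    by (elim carrier_VP_E) (simp add: mult_cls one_VP)
next
  fix x assume "x \<in> carrier (VP n)"
  then obtain w where w: "vp_word n w" "x = cls n w" by (rule carrier_VP_E)
  have "cls n (winv w) \<otimes>\<^bsub>VP n\<^esub> x = \<one>\<^bsub>VP n\<^esub>"
    using w winv_word[OF w(1)] winv_rel[OF w(1)]
    by (simp add: mult_cls one_VP cls_eqI)
  then show "\<exists>y\<in>carrier (VP n). y \<otimes>\<^bsub>VP n\<^esub> x = \<one>\<^bsub>VP n\<^esub>"
    using cls_in_carrier winv_word w by blast
qed


definition lam :: "nat \<Rightarrow> nat \<times> nat \<Rightarrow> vp_letter list set" where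
  "lam n a = cls n [(a, True)]"

lemma lam_carrier: "vp_gen n a \<Longrightarrow> lam n a \<in> carrier (VP n)"
  by (simp add: lam_def cls_in_carrier)

lemma cls_Cons: "vp_word n (l # w) \<Longrightarrow> cls n (l # w) = cls n [l] \<otimes>\<^bsub>VP n\<^esub> cls n w"
  using mult_cls[of n "[l]" w] by simp

lemma cls_Cons': "vp_gen n a \<Longrightarrow> vp_word n w \<Longrightarrow> w \<noteq> [] \<Longrightarrow>
  cls n ((a, b) # w) = cls n [(a, b)] \<otimes>\<^bsub>VP n\<^esub> cls n w"
  by (rule cls_Cons) simp

lemma cls_neg: assumes "vp_gen n a" shows "cls n [(a, False)] = inv\<^bsub>VP n\<^esub> (lam n a)"
proof -
  interpret group "VP n" by (rule group_VP)
  have "cls n [(a, False)] \<otimes>\<^bsub>VP n\<^esub> lam n a = \<one>\<^bsub>VP n\<^esub>"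
    unfolding lam_def one_VP using assms
    by (simp add: mult_cls cls_eqI vp_rel.cancel[of n a "[]" False "[]", simplified])
  then show ?thesis
    using assms by (metis inv_equality lam_carrier cls_in_carrier vp_word_Cons vp_word_Nil fst_conv)
qed

lemma cls_letter: "vp_gen n a \<Longrightarrow> cls n [(a, b)] = (if b then lam n a else inv\<^bsub>VP n\<^esub> (lam n a))"
  by (cases b) (auto simp: lam_def cls_neg)

lemma VP_generated:
  assumes "x \<in> carrier (VP n)"
  shows "x \<in> generate (VP n) (lam n ` {a. vp_gen n a})"
proof -
  interpret group "VP n" by (rule group_VP)
  obtain w where w: "vp_word n w" "x = cls n w" using assms by (rule carrier_VP_E)
  have "cls n w \<in> generate (VP n) (lam n ` {a. vp_gen n a})" using w(1)
  proof (induction w)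
    case Nil then show ?case by (simp add: one_VP[symmetric] generate.one)
  next
    case (Cons l w)
    obtain a b where l: "l = (a, b)" by (cases l) auto
    have a: "vp_gen n a" using Cons.prems l by simp
    have "cls n [l] \<in> generate (VP n) (lam n ` {a. vp_gen n a})"
      using a by (auto simp: l cls_letter intro: generate.incl generate.inv)
    moreover have "cls n (l # w) = cls n [l] \<otimes>\<^bsub>VP n\<^esub> cls n w"
      by (rule cls_Cons) (use Cons.prems in simp)
    ultimately show ?case using Cons by (simp add: generate.eng)
  qed
  then show ?thesis using w by simp
qed

lemma cls_relator: "vp_relator n r \<Longrightarrow> vp_word n r \<Longrightarrow> cls n r = \<one>\<^bsub>VP n\<^esub>"
  unfolding one_VP using vp_rel.relator[of n r "[]" "[]"] by (simp add: cls_eqI)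

lemma relator_word: "vp_relator n r \<Longrightarrow> vp_word n r"
  unfolding vp_relator_def vp_word_def vp_gen_def by auto

lemma lam_comm:
  assumes "distinct [i, j, k, l]" "{i, j, k, l} \<subseteq> {1..n}"
  shows "lam n (i, j) \<otimes>\<^bsub>VP n\<^esub> lam n (k, l) = lam n (k, l) \<otimes>\<^bsub>VP n\<^esub> lam n (i, j)"
proof -
  interpret group "VP n" by (rule group_VP)
  let ?r = "[((i,j),True), ((k,l),True), ((i,j),False), ((k,l),False)]"
  have r: "vp_relator n ?r" unfolding vp_relator_def using assms by blast
  have g: "vp_gen n (i, j)" "vp_gen n (k, l)" using assms by (auto simp: vp_gen_def)
  have "cls n ?r = lam n (i, j) \<otimes>\<^bsub>VP n\<^esub> (lam n (k, l) \<otimes>\<^bsub>VP n\<^esub> (inv\<^bsub>VP n\<^esub> lam n (i, j) \<otimes>\<^bsub>VP n\<^esub> inv\<^bsub>VP n\<^esub> lam n (k, l)))"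
    using relator_word[OF r] g
    by (simp add: cls_Cons' cls_letter)
  then have "lam n (i, j) \<otimes>\<^bsub>VP n\<^esub> (lam n (k, l) \<otimes>\<^bsub>VP n\<^esub> (inv\<^bsub>VP n\<^esub> lam n (i, j) \<otimes>\<^bsub>VP n\<^esub> inv\<^bsub>VP n\<^esub> lam n (k, l))) = \<one>\<^bsub>VP n\<^esub>"
    using cls_relator[OF r relator_word[OF r]] by simp
  then show ?thesis using g lam_carrier
    by (metis (no_types, lifting) inv_closed inv_mult_group inv_inv inv_equality m_assoc m_closed)
qed

lemma lam_triple:
  assumes "distinct [i, j, k]" "{i, j, k} \<subseteq> {1..n}"
  shows "lam n (k, i) \<otimes>\<^bsub>VP n\<^esub> lam n (k, j) \<otimes>\<^bsub>VP n\<^esub> lam n (i, j)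
       = lam n (i, j) \<otimes>\<^bsub>VP n\<^esub> lam n (k, j) \<otimes>\<^bsub>VP n\<^esub> lam n (k, i)"
proof -
  interpret group "VP n" by (rule group_VP)
  let ?r = "[((k,i),True), ((k,j),True), ((i,j),True),
            ((k,i),False), ((k,j),False), ((i,j),False)]"
  have r: "vp_relator n ?r" unfolding vp_relator_def using assms by blast
  have g: "vp_gen n (k, i)" "vp_gen n (k, j)" "vp_gen n (i, j)" using assms by (auto simp: vp_gen_def)
  note c = lam_carrier[OF g(1)] lam_carrier[OF g(2)] lam_carrier[OF g(3)]
  have "cls n ?r = lam n (k, i) \<otimes>\<^bsub>VP n\<^esub> (lam n (k, j) \<otimes>\<^bsub>VP n\<^esub> (lam n (i, j) \<otimes>\<^bsub>VP n\<^esub> (inv\<^bsub>VP n\<^esub> lam n (k, i) \<otimes>\<^bsub>VP n\<^esub> (inv\<^bsub>VP n\<^esub> lam n (k, j) \<otimes>\<^bsub>VP n\<^esub> inv\<^bsub>VP n\<^esub> lam n (i, j)))))"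
    using relator_word[OF r] g
    by (simp add: cls_Cons' cls_letter)
  then have e: "(lam n (k, i) \<otimes>\<^bsub>VP n\<^esub> lam n (k, j) \<otimes>\<^bsub>VP n\<^esub> lam n (i, j)) \<otimes>\<^bsub>VP n\<^esub> inv\<^bsub>VP n\<^esub> (lam n (i, j) \<otimes>\<^bsub>VP n\<^esub> lam n (k, j) \<otimes>\<^bsub>VP n\<^esub> lam n (k, i)) = \<one>\<^bsub>VP n\<^esub>"
    using cls_relator[OF r relator_word[OF r]] c by (simp add: m_assoc inv_mult_group)
  show ?thesis
    using e c by (metis inv_closed inv_equality inv_inv m_closed)
qed


type_synonym ix = "(nat \<times> nat) + (nat \<times> nat \<times> nat)"

definition dd :: "'a \<Rightarrow> 'a \<Rightarrow> int" where "dd a = (\<lambda>t. if t = a then 1 else 0)"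

definition cf :: "nat \<Rightarrow> nat \<Rightarrow> nat \<Rightarrow> ix \<Rightarrow> int" where
  "cf p q r = (if q < r then dd (Inr (p, q, r)) else - dd (Inr (p, r, q)))"

definition cs :: "nat \<Rightarrow> nat \<Rightarrow> nat \<Rightarrow> ix \<Rightarrow> int" where
  "cs p q r = (if r < q then dd (Inr (p, q, r)) else - dd (Inr (p, r, q)))"

definition om :: "nat \<times> nat \<Rightarrow> nat \<times> nat \<Rightarrow> ix \<Rightarrow> int" where
  "om a b =
    (if fst a = snd b \<and> snd a = fst b then
       (if fst a < snd a then dd (Inl (fst a, snd a)) else - dd (Inl (snd a, fst a)))
     else if fst a = fst b then cf (fst a) (snd a) (snd b)
     else if snd a = snd b then cs (snd a) (fst a) (fst b)
     else if snd a = fst b then - (cf (fst a) (snd a) (snd b) + cs (snd b) (fst a) (snd a))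
     else if fst a = snd b then cf (fst b) (snd b) (snd a) + cs (snd a) (fst b) (snd b)
     else 0)"

lemma cf_anti: "q \<noteq> r \<Longrightarrow> cf p r q = - cf p q r"
  by (auto simp: cf_def)

lemma cs_anti: "q \<noteq> r \<Longrightarrow> cs p r q = - cs p q r"
  by (auto simp: cs_def)

lemma om_sw: "a1 \<noteq> a2 \<Longrightarrow> om (a1, a2) (a2, a1) = (if a1 < a2 then dd (Inl (a1, a2)) else - dd (Inl (a2, a1)))"
  by (simp add: om_def)

lemma om_cf: "a1 \<noteq> a2 \<Longrightarrow> a1 \<noteq> b2 \<Longrightarrow> om (a1, a2) (a1, b2) = cf a1 a2 b2"
  by (simp add: om_def)

lemma om_cs: "a1 \<noteq> p \<Longrightarrow> b1 \<noteq> p \<Longrightarrow> a1 \<noteq> b1 \<Longrightarrow> om (a1, p) (b1, p) = cs p a1 b1"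
  by (simp add: om_def)

lemma om_path: "a1 \<noteq> a2 \<Longrightarrow> a1 \<noteq> b2 \<Longrightarrow> a2 \<noteq> b2 \<Longrightarrow>
    om (a1, a2) (a2, b2) = - (cf a1 a2 b2 + cs b2 a1 a2)"
  by (simp add: om_def)

lemma om_rpath: "a1 \<noteq> a2 \<Longrightarrow> a1 \<noteq> b1 \<Longrightarrow> a2 \<noteq> b1 \<Longrightarrow>
    om (a1, a2) (b1, a1) = cf b1 a1 a2 + cs a2 b1 a1"
  by (simp add: om_def)

lemma om_disj:
  assumes "a1 \<noteq> b1" "a1 \<noteq> b2" "a2 \<noteq> b1" "a2 \<noteq> b2"
  shows "om (a1, a2) (b1, b2) = 0"
  using assms by (simp add: om_def)

lemma om_anti:
  assumes "a1 \<noteq> a2" "b1 \<noteq> b2" "(a1, a2) \<noteq> (b1, b2)"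
  shows "om (b1, b2) (a1, a2) = - om (a1, a2) (b1, b2)"
proof -
  consider "a1 = b2" "a2 = b1" | "a1 = b1" "a2 \<noteq> b2" | "a2 = b2" "a1 \<noteq> b1"
    | "a2 = b1" "a1 \<noteq> b2" | "a1 = b2" "a2 \<noteq> b1"
    | "a1 \<noteq> b1" "a1 \<noteq> b2" "a2 \<noteq> b1" "a2 \<noteq> b2"
    using assms by blast
  then show ?thesis
  proof cases
    case 1 then show ?thesis using assms by (auto simp: om_sw)
  next
    case 2 then show ?thesis using assms by (auto simp: om_cf cf_def)
  next
    case 3 then show ?thesis using assms by (auto simp: om_cs cs_def)
  next
    case 4 then show ?thesis using assms by (simp add: om_path om_rpath)
  next
    case 5 then show ?thesis using assms by (simp add: om_path om_rpath)
  next
    case 6 then show ?thesis using assms by (simp add: om_disj)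
  qed
qed

lemma om_triple:
  assumes "distinct [i, j, k]"
  shows "om (k, i) (k, j) + om (k, i) (i, j) + om (k, j) (i, j) = 0"
  using assms by (simp add: om_cf om_cs om_path)

definition pr :: "ix \<Rightarrow> (nat \<times> nat) \<times> (nat \<times> nat)" where
  "pr i = (case i of Inl (a, b) \<Rightarrow> ((a, b), (b, a))
        | Inr (p, q, r) \<Rightarrow> (if q < r then ((p, q), (p, r)) else ((q, p), (r, p))))"

definition Ix :: "nat \<Rightarrow> ix set" where
  "Ix n = Inl ` {(i, j). 1 \<le> i \<and> i < j \<and> j \<le> n}
        \<union> Inr ` {(p, q, r). distinct [p, q, r] \<and> {p, q, r} \<subseteq> {1..n}}"

lemma om_pr: "i \<in> Ix n \<Longrightarrow> om (fst (pr i)) (snd (pr i)) = dd i"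
  by (auto simp: Ix_def pr_def om_sw om_cf om_cs cf_def cs_def)


definition lt :: "nat \<times> nat \<Rightarrow> nat \<times> nat \<Rightarrow> bool" where
  "lt a b \<longleftrightarrow> fst a < fst b \<or> (fst a = fst b \<and> snd a < snd b)"

definition omlt :: "nat \<times> nat \<Rightarrow> nat \<times> nat \<Rightarrow> ix \<Rightarrow> int" where
  "omlt a b = (if lt a b then om a b else 0)"

definition gens :: "nat \<Rightarrow> (nat \<times> nat) set" where "gens n = {a. vp_gen n a}"

lemma finite_gens: "finite (gens n)"
proof -
  have "gens n \<subseteq> {1..n} \<times> {1..n}" by (auto simp: gens_def vp_gen_def)
  then show ?thesis by (rule finite_subset) simp
qed

definition cc :: "nat \<Rightarrow> (nat \<times> nat \<Rightarrow> int) \<Rightarrow> (nat \<times> nat \<Rightarrow> int) \<Rightarrow> ix \<Rightarrow> int" where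
  "cc n x y = (\<lambda>t. \<Sum>a\<in>gens n. x a * (\<Sum>b\<in>gens n. y b * omlt a b t))"

lemma cc_add1: "cc n (x + y) z = cc n x z + cc n y z"
  by (simp add: cc_def fun_eq_iff distrib_right sum.distrib)

lemma cc_add2: "cc n x (y + z) = cc n x y + cc n x z"
  by (simp add: cc_def fun_eq_iff distrib_left distrib_right sum.distrib)

lemma cc_neg1: "cc n (- x) y = - cc n x y"
  by (simp add: cc_def fun_eq_iff sum_negf)

lemma cc_neg2: "cc n x (- y) = - cc n x y"
  by (simp add: cc_def fun_eq_iff sum_negf)

lemma cc_diff1: "cc n (x - y) z = cc n x z - cc n y z"
  using cc_add1[of n x "- y" z] cc_neg1[of n y z] by simp

lemma cc_diff2: "cc n x (y - z) = cc n x y - cc n x z"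
  using cc_add2[of n x y "- z"] cc_neg2[of n x z] by simp

lemma cc_zero1: "cc n 0 y = 0"
  by (simp add: cc_def fun_eq_iff)

lemma cc_zero2: "cc n x 0 = 0"
  by (simp add: cc_def fun_eq_iff)

lemma dd_mult: "dd a x * y = (if x = a then y else 0)"
  by (simp add: dd_def)

lemma cc_dd: "a \<in> gens n \<Longrightarrow> b \<in> gens n \<Longrightarrow> cc n (dd a) (dd b) = omlt a b"
  by (simp add: cc_def fun_eq_iff dd_mult finite_gens)

lemma lt_cases: "a \<noteq> b \<Longrightarrow> lt a b \<or> lt b a"
  by (cases a, cases b) (auto simp: lt_def)

lemma lt_asym: "lt a b \<Longrightarrow> \<not> lt b a"
  by (auto simp: lt_def)

lemma omlt_diff:
  assumes "a \<in> gens n" "b \<in> gens n" "a \<noteq> b"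
  shows "omlt a b - omlt b a = om a b"
proof -
  obtain a1 a2 b1 b2 where ab: "a = (a1, a2)" "b = (b1, b2)" by (cases a, cases b)
  have d: "a1 \<noteq> a2" "b1 \<noteq> b2" using assms ab by (auto simp: gens_def vp_gen_def)
  have anti: "om b a = - om a b" using om_anti[OF d] assms ab by simp
  show ?thesis
    using lt_cases[OF assms(3)] lt_asym[of a b] lt_asym[of b a] anti
    by (auto simp: omlt_def)
qed

definition HH :: "nat \<Rightarrow> ((nat \<times> nat \<Rightarrow> int) \<times> (ix \<Rightarrow> int)) monoid" where
  "HH n = \<lparr>carrier = UNIV,
           monoid.mult = (\<lambda>p q. (fst p + fst q, snd p + snd q + cc n (fst p) (fst q))),
           one = (0, 0)\<rparr>"

lemma carrier_HH [simp]: "carrier (HH n) = UNIV" by (simp add: HH_def)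
lemma mult_HH [simp]: "p \<otimes>\<^bsub>HH n\<^esub> q = (fst p + fst q, snd p + snd q + cc n (fst p) (fst q))"
  by (simp add: HH_def)
lemma one_HH [simp]: "\<one>\<^bsub>HH n\<^esub> = (0, 0)" by (simp add: HH_def)

lemma group_HH: "group (HH n)"
proof (rule groupI)
  fix x y z :: "(nat \<times> nat \<Rightarrow> int) \<times> (ix \<Rightarrow> int)"
  show "x \<otimes>\<^bsub>HH n\<^esub> y \<otimes>\<^bsub>HH n\<^esub> z = x \<otimes>\<^bsub>HH n\<^esub> (y \<otimes>\<^bsub>HH n\<^esub> z)"
    by (simp add: cc_add1 cc_add2 ac_simps)
next
  fix x :: "(nat \<times> nat \<Rightarrow> int) \<times> (ix \<Rightarrow> int)"
  show "\<one>\<^bsub>HH n\<^esub> \<otimes>\<^bsub>HH n\<^esub> x = x" by (simp add: cc_zero1)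
  show "\<exists>y\<in>carrier (HH n). y \<otimes>\<^bsub>HH n\<^esub> x = \<one>\<^bsub>HH n\<^esub>"
    by (intro bexI[where x = "(- fst x, - snd x + cc n (fst x) (fst x))"]) (simp_all add: cc_neg1)
qed auto

lemma inv_HH: "inv\<^bsub>HH n\<^esub> p = (- fst p, - snd p + cc n (fst p) (fst p))"
proof -
  have "(- fst p, - snd p + cc n (fst p) (fst p)) \<otimes>\<^bsub>HH n\<^esub> p = \<one>\<^bsub>HH n\<^esub>"
    by (simp add: cc_neg1)
  then show ?thesis using group.inv_equality[OF group_HH] by simp
qed

lemma HH_comm:
  "inv\<^bsub>HH n\<^esub> p \<otimes>\<^bsub>HH n\<^esub> inv\<^bsub>HH n\<^esub> q \<otimes>\<^bsub>HH n\<^esub> p \<otimes>\<^bsub>HH n\<^esub> q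
   = (0, cc n (fst p) (fst q) - cc n (fst q) (fst p))"
  by (simp add: inv_HH cc_add1 cc_add2 cc_neg1 cc_neg2 cc_diff1 cc_diff2 algebra_simps)


lemma HH_l_one: "\<one>\<^bsub>HH n\<^esub> \<otimes>\<^bsub>HH n\<^esub> p = p"
  by (simp add: cc_zero1)

lemma HH_r_one: "p \<otimes>\<^bsub>HH n\<^esub> \<one>\<^bsub>HH n\<^esub> = p"
  by (simp add: cc_zero2)

lemma HH_assoc: "p \<otimes>\<^bsub>HH n\<^esub> q \<otimes>\<^bsub>HH n\<^esub> r = p \<otimes>\<^bsub>HH n\<^esub> (q \<otimes>\<^bsub>HH n\<^esub> r)"
  using group.is_monoid[OF group_HH] by (simp add: monoid.m_assoc del: mult_HH)

lemma HH_rel1: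
  "p \<otimes>\<^bsub>HH n\<^esub> (q \<otimes>\<^bsub>HH n\<^esub> (inv\<^bsub>HH n\<^esub> p \<otimes>\<^bsub>HH n\<^esub> (inv\<^bsub>HH n\<^esub> q \<otimes>\<^bsub>HH n\<^esub> \<one>\<^bsub>HH n\<^esub>)))
   = (0, cc n (fst p) (fst q) - cc n (fst q) (fst p))"
  by (simp add: inv_HH cc_add1 cc_add2 cc_neg1 cc_neg2 cc_diff1 cc_diff2 cc_zero2 algebra_simps)

lemma HH_rel2:
  "p \<otimes>\<^bsub>HH n\<^esub> (q \<otimes>\<^bsub>HH n\<^esub> (r \<otimes>\<^bsub>HH n\<^esub> (inv\<^bsub>HH n\<^esub> p \<otimes>\<^bsub>HH n\<^esub>
     (inv\<^bsub>HH n\<^esub> q \<otimes>\<^bsub>HH n\<^esub> (inv\<^bsub>HH n\<^esub> r \<otimes>\<^bsub>HH n\<^esub> \<one>\<^bsub>HH n\<^esub>)))))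
   = (0, (cc n (fst p) (fst q) - cc n (fst q) (fst p)) + (cc n (fst p) (fst r) - cc n (fst r) (fst p))
        + (cc n (fst q) (fst r) - cc n (fst r) (fst q)))"
  by (simp add: inv_HH cc_add1 cc_add2 cc_neg1 cc_neg2 cc_diff1 cc_diff2 cc_zero2 algebra_simps)

definition le :: "nat \<Rightarrow> vp_letter \<Rightarrow> (nat \<times> nat \<Rightarrow> int) \<times> (ix \<Rightarrow> int)" where
  "le n l = (if snd l then (dd (fst l), 0) else inv\<^bsub>HH n\<^esub> (dd (fst l), 0))"

primrec fw :: "nat \<Rightarrow> vp_letter list \<Rightarrow> (nat \<times> nat \<Rightarrow> int) \<times> (ix \<Rightarrow> int)" where
  "fw n [] = \<one>\<^bsub>HH n\<^esub>"
| "fw n (l # w) = le n l \<otimes>\<^bsub>HH n\<^esub> fw n w"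

lemma fw_append: "fw n (u @ v) = fw n u \<otimes>\<^bsub>HH n\<^esub> fw n v"
proof (induction u)
  case Nil then show ?case by (simp only: HH_l_one append_Nil fw.simps)
next
  case (Cons l u) then show ?case by (simp only: HH_assoc append_Cons fw.simps)
qed

lemma fw_cancel: "fw n [(g, b), (g, \<not> b)] = \<one>\<^bsub>HH n\<^esub>"
  using group.r_inv[OF group_HH, of "(dd g, 0)" n] group.l_inv[OF group_HH, of "(dd g, 0)" n]
  by (cases b) (simp_all add: le_def HH_r_one del: mult_HH one_HH)

lemma dd_gen_comm:
  assumes "a \<in> gens n" "b \<in> gens n" "a \<noteq> b"
  shows "cc n (dd a) (dd b) - cc n (dd b) (dd a) = om a b"
  using assms by (simp add: cc_dd omlt_diff)

lemma fw_relator: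
  assumes "vp_relator n r" shows "fw n r = \<one>\<^bsub>HH n\<^esub>"
  using assms unfolding vp_relator_def
proof (elim disjE exE conjE)
  fix i j k l assume d: "distinct [i, j, k, l]" and s: "{i, j, k, l} \<subseteq> {1..n}"
    and r: "r = [((i, j), True), ((k, l), True), ((i, j), False), ((k, l), False)]"
  have g: "(i, j) \<in> gens n" "(k, l) \<in> gens n" using d s by (auto simp: gens_def vp_gen_def)
  have "fw n r = (0, om (i, j) (k, l))"
    using HH_rel1[where p = "(dd (i, j), 0)" and n = n and q = "(dd (k, l), 0)"] dd_gen_comm[OF g] d
    by (simp add: r le_def del: mult_HH one_HH)
  also have "\<dots> = \<one>\<^bsub>HH n\<^esub>" using d by (simp add: om_disj)
  finally show ?thesis .
next
  fix i j k assume d: "distinct [i, j, k]" and s: "{i, j, k} \<subseteq> {1..n}"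
    and r: "r = [((k, i), True), ((k, j), True), ((i, j), True),
            ((k, i), False), ((k, j), False), ((i, j), False)]"
  have g: "(k, i) \<in> gens n" "(k, j) \<in> gens n" "(i, j) \<in> gens n"
    using d s by (auto simp: gens_def vp_gen_def)
  have "fw n r = (0, om (k, i) (k, j) + om (k, i) (i, j) + om (k, j) (i, j))"
    using HH_rel2[where p = "(dd (k, i), 0)" and n = n and q = "(dd (k, j), 0)" and r = "(dd (i, j), 0)"]
      dd_gen_comm[OF g(1,2)] dd_gen_comm[OF g(1,3)] dd_gen_comm[OF g(2,3)] d
    by (simp add: r le_def del: mult_HH one_HH)
  also have "\<dots> = \<one>\<^bsub>HH n\<^esub>" using om_triple[OF d] by simp
  finally show ?thesis .
qed

lemma fw_rel: "vp_rel n u v \<Longrightarrow> fw n u = fw n v"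
proof (induction rule: vp_rel.induct)
  case (cancel g u b v)
  have "fw n (u @ [(g, b), (g, \<not> b)] @ v) = fw n u \<otimes>\<^bsub>HH n\<^esub> (\<one>\<^bsub>HH n\<^esub> \<otimes>\<^bsub>HH n\<^esub> fw n v)"
    by (simp only: fw_append fw_cancel)
  then show ?case by (simp only: fw_append HH_l_one)
next
  case (relator r u v)
  have "fw n (u @ r @ v) = fw n u \<otimes>\<^bsub>HH n\<^esub> (\<one>\<^bsub>HH n\<^esub> \<otimes>\<^bsub>HH n\<^esub> fw n v)"
    by (simp only: fw_append fw_relator[OF relator])
  then show ?case by (simp only: fw_append HH_l_one)
qed auto

definition Phi :: "nat \<Rightarrow> vp_letter list set \<Rightarrow> (nat \<times> nat \<Rightarrow> int) \<times> (ix \<Rightarrow> int)" where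
  "Phi n A = fw n (SOME w. w \<in> A)"

lemma Phi_cls: assumes "vp_word n w" shows "Phi n (cls n w) = fw n w"
proof -
  have "w \<in> cls n w" using assms by (simp add: mem_cls vp_rel.refl)
  then have "(SOME w'. w' \<in> cls n w) \<in> cls n w" by (rule someI)
  then have "vp_rel n w (SOME w'. w' \<in> cls n w)" unfolding mem_cls[of "SOME w'. w' \<in> cls n w"] by blast
  then show ?thesis unfolding Phi_def by (simp add: fw_rel)
qed

lemma Phi_hom: "Phi n \<in> hom (VP n) (HH n)"
proof (rule homI)
  fix x y assume "x \<in> carrier (VP n)" "y \<in> carrier (VP n)"
  then show "Phi n (x \<otimes>\<^bsub>VP n\<^esub> y) = Phi n x \<otimes>\<^bsub>HH n\<^esub> Phi n y"
    by (elim carrier_VP_E) (simp add: mult_cls Phi_cls fw_append del: mult_HH)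
qed simp

lemma Phi_lam: "vp_gen n a \<Longrightarrow> Phi n (lam n a) = (dd a, 0)"
  by (simp add: lam_def Phi_cls le_def cc_zero2)


definition commG :: "('a, 'b) monoid_scheme \<Rightarrow> 'a \<Rightarrow> 'a \<Rightarrow> 'a" where
  "commG G x y = inv\<^bsub>G\<^esub> x \<otimes>\<^bsub>G\<^esub> inv\<^bsub>G\<^esub> y \<otimes>\<^bsub>G\<^esub> x \<otimes>\<^bsub>G\<^esub> y"

context group
begin

lemma inv_cancel_l [simp]: "x \<in> carrier G \<Longrightarrow> y \<in> carrier G \<Longrightarrow> inv x \<otimes> (x \<otimes> y) = y"
  by (simp add: m_assoc[symmetric])

lemma inv_cancel_r [simp]: "x \<in> carrier G \<Longrightarrow> y \<in> carrier G \<Longrightarrow> x \<otimes> (inv x \<otimes> y) = y"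
  by (simp add: m_assoc[symmetric])

lemma commG_closed [simp]: "x \<in> carrier G \<Longrightarrow> y \<in> carrier G \<Longrightarrow> commG G x y \<in> carrier G"
  by (simp add: commG_def)

lemma conj_commG:
  assumes "g \<in> carrier G" "x \<in> carrier G" "y \<in> carrier G"
  shows "g \<otimes> commG G x y \<otimes> inv g = commG G (g \<otimes> x \<otimes> inv g) (g \<otimes> y \<otimes> inv g)"
  using assms by (simp add: commG_def m_assoc inv_mult_group)

lemma lc2_eq: "lower_central G 2 = generate G {commG G x y | x y. x \<in> carrier G \<and> y \<in> carrier G}"
proof -
  have "(2::nat) = Suc 1" by simp
  then show ?thesis by (simp only: lower_central.simps) (simp add: commG_def)
qed

lemma lc3_eq: "lower_central G 3 = generate G {commG G x y | x y. x \<in> lower_central G 2 \<and> y \<in> carrier G}"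
proof -
  have "(3::nat) = Suc 2" by simp
  then show ?thesis by (simp only: lower_central.simps) (simp add: commG_def)
qed

lemma comm_in_lc2: "x \<in> carrier G \<Longrightarrow> y \<in> carrier G \<Longrightarrow> commG G x y \<in> lower_central G 2"
  unfolding lc2_eq by (blast intro: generate.incl)

lemma lc2_sub: "lower_central G 2 \<subseteq> carrier G"
  unfolding lc2_eq by (rule generate_incl) auto

lemma lc2_subgroup: "subgroup (lower_central G 2) G"
  unfolding lc2_eq by (rule generate_is_subgroup) auto

lemma comm_in_lc3: "x \<in> lower_central G 2 \<Longrightarrow> y \<in> carrier G \<Longrightarrow> commG G x y \<in> lower_central G 3"
  unfolding lc3_eq by (blast intro: generate.incl)

lemma lc3_sub2: "lower_central G 3 \<subseteq> lower_central G 2"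
  unfolding lc3_eq
  by (rule generate_subgroup_incl[OF _ lc2_subgroup]) (auto intro: comm_in_lc2 dest: lc2_sub[THEN subsetD])

lemma lc3_subgroup: "subgroup (lower_central G 3) G"
  unfolding lc3_eq by (rule generate_is_subgroup) (auto dest: lc2_sub[THEN subsetD])

lemma lc2_normal: "lower_central G 2 \<lhd> G"
  unfolding lc2_eq
proof (rule normal_generateI)
  show "{commG G x y |x y. x \<in> carrier G \<and> y \<in> carrier G} \<subseteq> carrier G" by auto
next
  fix h g assume "h \<in> {commG G x y |x y. x \<in> carrier G \<and> y \<in> carrier G}" "g \<in> carrier G"
  then show "g \<otimes> h \<otimes> inv g \<in> {commG G x y |x y. x \<in> carrier G \<and> y \<in> carrier G}"
    using conj_commG by fastforce
qed

lemma lc3_normal: "lower_central G 3 \<lhd> G"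
  unfolding lc3_eq
proof (rule normal_generateI)
  show "{commG G x y |x y. x \<in> lower_central G 2 \<and> y \<in> carrier G} \<subseteq> carrier G"
    using lc2_sub by auto
next
  fix h g assume h: "h \<in> {commG G x y |x y. x \<in> lower_central G 2 \<and> y \<in> carrier G}" and g: "g \<in> carrier G"
  then obtain x y where xy: "h = commG G x y" "x \<in> lower_central G 2" "y \<in> carrier G" by blast
  have x: "x \<in> carrier G" using xy lc2_sub by auto
  have "g \<otimes> x \<otimes> inv g \<in> lower_central G 2"
    using normal_inv_iff[of "lower_central G 2"] lc2_normal g xy by blast
  then show "g \<otimes> h \<otimes> inv g \<in> {commG G x y |x y. x \<in> lower_central G 2 \<and> y \<in> carrier G}"
    using conj_commG[OF g x xy(3)] xy g by fastforce
qed

lemma rcos_eqI: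
  assumes "subgroup H G" "x \<in> carrier G" "y \<in> carrier G" "x \<otimes> inv y \<in> H"
  shows "H #> x = H #> y"
proof -
  have "x \<in> H #> y" using subgroup.rcos_module_rev[OF assms(1) is_group assms(3,2,4)] .
  then show ?thesis using repr_independence[OF _ assms(3,1)] by simp
qed

lemma rcos_eqD:
  assumes "subgroup H G" "x \<in> carrier G" "y \<in> carrier G" "H #> x = H #> y"
  shows "x \<otimes> inv y \<in> H"
proof -
  have "x \<in> H #> y" using rcos_self[OF assms(2,1)] assms(4) by simp
  then show ?thesis using subgroup.rcos_module_imp[OF assms(1) is_group assms(3)] by simp
qed


lemma r_coset_restrict: "r_coset (G\<lparr>carrier := S\<rparr>) = r_coset G"
  by (simp add: r_coset_def fun_eq_iff)

lemma group_G2: "group (G\<lparr>carrier := lower_central G 2\<rparr>)"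
  by (rule subgroup_imp_group[OF lc2_subgroup])

lemma lc3_normal_G2: "lower_central G 3 \<lhd> G\<lparr>carrier := lower_central G 2\<rparr>"
  by (rule normal_restrict_supergroup[OF lc2_subgroup lc3_normal lc3_sub2])

lemma comm_group_Q: "comm_group (G\<lparr>carrier := lower_central G 2\<rparr> Mod lower_central G 3)"
proof (rule group.group_comm_groupI)
  show "group (G\<lparr>carrier := lower_central G 2\<rparr> Mod lower_central G 3)"
    by (rule normal.factorgroup_is_group[OF lc3_normal_G2])
next
  fix XX YY assume XX: "XX \<in> carrier (G\<lparr>carrier := lower_central G 2\<rparr> Mod lower_central G 3)"
    and YY: "YY \<in> carrier (G\<lparr>carrier := lower_central G 2\<rparr> Mod lower_central G 3)"
  obtain x where x: "x \<in> lower_central G 2" "XX = lower_central G 3 #> x"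
    using XX by (auto simp: carrier_FactGroup r_coset_restrict)
  obtain y where y: "y \<in> lower_central G 2" "YY = lower_central G 3 #> y"
    using YY by (auto simp: carrier_FactGroup r_coset_restrict)
  have xc: "x \<in> carrier G" and yc: "y \<in> carrier G" using x y lc2_sub by auto
  have sum: "\<And>a b. a \<in> lower_central G 2 \<Longrightarrow> b \<in> lower_central G 2 \<Longrightarrow>
      (lower_central G 3 #> a) \<otimes>\<^bsub>G\<lparr>carrier := lower_central G 2\<rparr> Mod lower_central G 3\<^esub> (lower_central G 3 #> b)
      = lower_central G 3 #> (a \<otimes> b)"
    using normal.rcos_sum[OF lc3_normal_G2] by (simp add: r_coset_restrict)
  have "x \<otimes> y \<otimes> inv (y \<otimes> x) = commG G (inv x) (inv y)"
    using xc yc by (simp add: commG_def m_assoc inv_mult_group)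
  also have "\<dots> \<in> lower_central G 3"
    using x y xc yc lc2_subgroup by (intro comm_in_lc3) (auto simp: subgroup.m_inv_closed)
  finally have "lower_central G 3 #> (x \<otimes> y) = lower_central G 3 #> (y \<otimes> x)"
    using xc yc by (intro rcos_eqI[OF lc3_subgroup]) auto
  then show "XX \<otimes>\<^bsub>G\<lparr>carrier := lower_central G 2\<rparr> Mod lower_central G 3\<^esub> YY
           = YY \<otimes>\<^bsub>G\<lparr>carrier := lower_central G 2\<rparr> Mod lower_central G 3\<^esub> XX"
    using x y sum by simp
qed

lemma K_normal:
  assumes "subgroup K G" "K \<subseteq> lower_central G 2" "lower_central G 3 \<subseteq> K"
    "g \<in> carrier G" "h \<in> K"
  shows "g \<otimes> h \<otimes> inv g \<in> K"
proof -
  have h: "h \<in> carrier G" using assms(1,5) subgroup.subset by blast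
  have "g \<otimes> h \<otimes> inv g = h \<otimes> commG G h (inv g)"
    using h assms(4) by (simp add: commG_def m_assoc)
  moreover have "commG G h (inv g) \<in> K"
    using comm_in_lc3[of h "inv g"] assms by auto
  ultimately show ?thesis using assms(1,5) subgroup.m_closed by fastforce
qed

lemma comm_mult_left:
  "x \<in> carrier G \<Longrightarrow> y \<in> carrier G \<Longrightarrow> b \<in> carrier G \<Longrightarrow>
   commG G (x \<otimes> y) b = inv y \<otimes> commG G x b \<otimes> y \<otimes> commG G y b"
  by (simp add: commG_def m_assoc inv_mult_group)

lemma comm_inv_left:
  "x \<in> carrier G \<Longrightarrow> b \<in> carrier G \<Longrightarrow>
   commG G (inv x) b = x \<otimes> inv (commG G x b) \<otimes> inv x"
  by (simp add: commG_def m_assoc inv_mult_group)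

lemma comm_mult_right:
  "x \<in> carrier G \<Longrightarrow> y \<in> carrier G \<Longrightarrow> z \<in> carrier G \<Longrightarrow>
   commG G x (y \<otimes> z) = commG G x z \<otimes> (inv z \<otimes> commG G x y \<otimes> z)"
  by (simp add: commG_def m_assoc inv_mult_group)

lemma comm_inv_right:
  "x \<in> carrier G \<Longrightarrow> z \<in> carrier G \<Longrightarrow>
   commG G x (inv z) = z \<otimes> inv (commG G x z) \<otimes> inv z"
  by (simp add: commG_def m_assoc inv_mult_group)

lemma comm_one_left: "b \<in> carrier G \<Longrightarrow> commG G \<one> b = \<one>"
  by (simp add: commG_def)

lemma comm_one_right: "b \<in> carrier G \<Longrightarrow> commG G b \<one> = \<one>"
  by (simp add: commG_def)

lemma comm_all_in:
  assumes K: "subgroup K G" and nK: "\<And>g h. g \<in> carrier G \<Longrightarrow> h \<in> K \<Longrightarrow> g \<otimes> h \<otimes> inv g \<in> K"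
    and gen: "carrier G \<subseteq> generate G Gen" and GenC: "Gen \<subseteq> carrier G"
    and base: "\<And>a b. a \<in> Gen \<Longrightarrow> b \<in> Gen \<Longrightarrow> commG G a b \<in> K"
    and x: "x \<in> carrier G" and y: "y \<in> carrier G"
  shows "commG G x y \<in> K"
proof -
  note Kc = subgroup.subset[OF K]
  have step1: "commG G x b \<in> K" if b: "b \<in> Gen" and x: "x \<in> carrier G" for x b
  proof -
    have bc: "b \<in> carrier G" using b GenC by auto
    have "x \<in> generate G Gen" using x gen by auto
    then show ?thesis
    proof (induction x rule: generate.induct)
      case one then show ?case using comm_one_left[OF bc] subgroup.one_closed[OF K] by simp
    next
      case (incl h) then show ?case using base b by auto
    next
      case (inv h)
      have hc: "h \<in> carrier G" using inv GenC by auto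
      have "h \<otimes> inv (commG G h b) \<otimes> inv h \<in> K"
        using nK[OF hc] subgroup.m_inv_closed[OF K] base[OF inv b] by simp
      then show ?case using comm_inv_left[OF hc bc] by simp
    next
      case (eng h1 h2)
      have c: "h1 \<in> carrier G" "h2 \<in> carrier G"
        using eng.hyps generate_in_carrier[OF GenC] by auto
      have "inv h2 \<otimes> commG G h1 b \<otimes> h2 \<in> K"
        using nK[of "inv h2" "commG G h1 b"] eng.IH c by simp
      then show ?case using comm_mult_left[OF c bc] eng.IH subgroup.m_closed[OF K] by simp
    qed
  qed
  have "y \<in> generate G Gen" using y gen by auto
  then show ?thesis
  proof (induction y rule: generate.induct)
    case one then show ?case using comm_one_right[OF x] subgroup.one_closed[OF K] by simp
  next
    case (incl h) then show ?case using step1[OF _ x] by simp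
  next
    case (inv h)
    have hc: "h \<in> carrier G" using inv GenC by auto
    have "h \<otimes> inv (commG G x h) \<otimes> inv h \<in> K"
      using nK[OF hc] subgroup.m_inv_closed[OF K] step1[OF inv x] by simp
    then show ?case using comm_inv_right[OF x hc] by simp
  next
    case (eng h1 h2)
    have c: "h1 \<in> carrier G" "h2 \<in> carrier G"
      using eng.hyps generate_in_carrier[OF GenC] by auto
    have "inv h2 \<otimes> commG G x h1 \<otimes> h2 \<in> K"
      using nK[of "inv h2" "commG G x h1"] eng.IH c by simp
    then show ?case using comm_mult_right[OF x c] eng.IH subgroup.m_closed[OF K] by simp
  qed
qed

lemma comm_path:
  assumes K: "subgroup K G" and nK: "\<And>g h. g \<in> carrier G \<Longrightarrow> h \<in> K \<Longrightarrow> g \<otimes> h \<otimes> inv g \<in> K"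
    and c: "x \<in> carrier G" "y \<in> carrier G" "z \<in> carrier G"
    and rel: "x \<otimes> y \<otimes> z = z \<otimes> y \<otimes> x"
    and t1: "commG G x y \<in> K" and t2: "commG G y z \<in> K"
  shows "commG G x z \<in> K"
proof -
  let ?w = "inv x \<otimes> inv y \<otimes> inv z \<otimes> x \<otimes> y \<otimes> z"
  have w: "?w = \<one>"
  proof -
    have "?w = inv (z \<otimes> y \<otimes> x) \<otimes> (x \<otimes> y \<otimes> z)"
      using c by (simp add: m_assoc inv_mult_group)
    also have "\<dots> = \<one>" using rel c by simp
    finally show ?thesis .
  qed
  have "commG G x z = (inv x \<otimes> inv (commG G y z) \<otimes> x) \<otimes> ?w \<otimes> (inv z \<otimes> inv (commG G x y) \<otimes> z)"
    using c by (simp add: commG_def m_assoc inv_mult_group)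
  also have "\<dots> = (inv x \<otimes> inv (commG G y z) \<otimes> inv (inv x)) \<otimes> (inv z \<otimes> inv (commG G x y) \<otimes> inv (inv z))"
    using c w by simp
  also have "\<dots> \<in> K"
    using nK[of "inv x" "inv (commG G y z)"] nK[of "inv z" "inv (commG G x y)"] c t1 t2
      subgroup.m_inv_closed[OF K] subgroup.m_closed[OF K] by simp
  finally show ?thesis .
qed

end


abbreviation "L2 n \<equiv> lower_central (VP n) 2"
abbreviation "L3 n \<equiv> lower_central (VP n) 3"

lemma group_hom_Phi: "group_hom (VP n) (HH n) (Phi n)"
  unfolding group_hom_def group_hom_axioms_def using group_VP group_HH Phi_hom by blast

lemma Phi_inv: "x \<in> carrier (VP n) \<Longrightarrow> Phi n (inv\<^bsub>VP n\<^esub> x) = inv\<^bsub>HH n\<^esub> (Phi n x)"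
  by (rule group_hom.hom_inv[OF group_hom_Phi])

lemma Phi_mult: "x \<in> carrier (VP n) \<Longrightarrow> y \<in> carrier (VP n) \<Longrightarrow>
    Phi n (x \<otimes>\<^bsub>VP n\<^esub> y) = Phi n x \<otimes>\<^bsub>HH n\<^esub> Phi n y"
  by (rule group_hom.hom_mult[OF group_hom_Phi])

lemma Phi_one: "Phi n \<one>\<^bsub>VP n\<^esub> = (0, 0)"
  using group_hom.hom_one[OF group_hom_Phi] by (simp add: zero_fun_def)

lemma Phi_commG:
  assumes "x \<in> carrier (VP n)" "y \<in> carrier (VP n)"
  shows "Phi n (commG (VP n) x y) = (0, cc n (fst (Phi n x)) (fst (Phi n y)) - cc n (fst (Phi n y)) (fst (Phi n x)))"
proof -
  interpret group "VP n" by (rule group_VP)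
  have "Phi n (commG (VP n) x y) = inv\<^bsub>HH n\<^esub> (Phi n x) \<otimes>\<^bsub>HH n\<^esub> inv\<^bsub>HH n\<^esub> (Phi n y) \<otimes>\<^bsub>HH n\<^esub> Phi n x \<otimes>\<^bsub>HH n\<^esub> Phi n y"
    using assms by (simp add: commG_def Phi_mult Phi_inv del: mult_HH)
  then show ?thesis by (simp only: HH_comm)
qed

lemma Phi_L2: "x \<in> L2 n \<Longrightarrow> fst (Phi n x) = 0"
proof -
  interpret group "VP n" by (rule group_VP)
  have S: "{commG (VP n) x y |x y. x \<in> carrier (VP n) \<and> y \<in> carrier (VP n)} \<subseteq> carrier (VP n)" by auto
  assume "x \<in> L2 n"
  then have "x \<in> generate (VP n) {commG (VP n) x y |x y. x \<in> carrier (VP n) \<and> y \<in> carrier (VP n)}"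
    by (simp add: lc2_eq)
  then show ?thesis
  proof (induction rule: generate.induct)
    case one then show ?case by (simp add: Phi_one)
  next
    case (incl h)
    then obtain a b where "h = commG (VP n) a b" "a \<in> carrier (VP n)" "b \<in> carrier (VP n)" by blast
    then show ?case using Phi_commG[of a n b] by simp
  next
    case (inv h)
    then obtain a b where ab: "h = commG (VP n) a b" "a \<in> carrier (VP n)" "b \<in> carrier (VP n)" by blast
    then have "fst (Phi n h) = 0" using Phi_commG[of a n b] by simp
    moreover have "h \<in> carrier (VP n)" using ab by simp
    ultimately show ?case by (simp add: Phi_inv inv_HH)
  next
    case (eng h1 h2)
    have "h1 \<in> carrier (VP n)" "h2 \<in> carrier (VP n)"
      by (rule generate_in_carrier[OF S eng.hyps(1)], rule generate_in_carrier[OF S eng.hyps(2)])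
    then show ?case using eng.IH by (simp add: Phi_mult)
  qed
qed

lemma Phi_comm3:
  assumes "x \<in> L2 n" "y \<in> carrier (VP n)"
  shows "Phi n (commG (VP n) x y) = (0, 0)"
proof -
  have "x \<in> carrier (VP n)" using assms group.lc2_sub[OF group_VP] by auto
  then have "Phi n (commG (VP n) x y) = (0, cc n 0 (fst (Phi n y)) - cc n (fst (Phi n y)) 0)"
    using Phi_commG[of x n y] Phi_L2[OF assms(1)] assms by simp
  then show ?thesis by (simp only: cc_zero1 cc_zero2 diff_self)
qed

lemma Phi_L3: "x \<in> L3 n \<Longrightarrow> Phi n x = (0, 0)"
proof -
  interpret group "VP n" by (rule group_VP)
  have S: "{commG (VP n) x y |x y. x \<in> L2 n \<and> y \<in> carrier (VP n)} \<subseteq> carrier (VP n)"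
    using lc2_sub by auto
  assume "x \<in> L3 n"
  then have "x \<in> generate (VP n) {commG (VP n) x y |x y. x \<in> L2 n \<and> y \<in> carrier (VP n)}"
    by (simp add: lc3_eq)
  then show ?thesis
  proof (induction rule: generate.induct)
    case one then show ?case using Phi_one by (simp add: fun_eq_iff)
  next
    case (incl h)
    then obtain a b where "h = commG (VP n) a b" "a \<in> L2 n" "b \<in> carrier (VP n)" by blast
    then show ?case using Phi_comm3 by (simp add: fun_eq_iff)
  next
    case (inv h)
    then obtain a b where ab: "h = commG (VP n) a b" "a \<in> L2 n" "b \<in> carrier (VP n)" by blast
    then have "Phi n h = (0, 0)" using Phi_comm3 by simp
    moreover have "h \<in> carrier (VP n)" using ab S by blast
    ultimately show ?case by (simp add: Phi_inv inv_HH cc_zero1 fun_eq_iff)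
  next
    case (eng h1 h2)
    have "h1 \<in> carrier (VP n)" "h2 \<in> carrier (VP n)"
      by (rule generate_in_carrier[OF S eng.hyps(1)], rule generate_in_carrier[OF S eng.hyps(2)])
    then show ?case using eng.IH by (simp add: Phi_mult fun_eq_iff cc_def)
  qed
qed

lemma finite_Ix: "finite (Ix n)"
proof -
  have "Ix n \<subseteq> Inl ` ({..n} \<times> {..n}) \<union> Inr ` ({..n} \<times> {..n} \<times> {..n})"
    by (auto simp: Ix_def)
  then show ?thesis by (rule finite_subset) auto
qed

definition theta :: "nat \<Rightarrow> (ix \<Rightarrow> nat) \<Rightarrow> vp_letter list set \<Rightarrow> (nat \<Rightarrow>\<^sub>0 int)" where
  "theta n idx x = (\<Sum>i\<in>Ix n. frag_cmul (snd (Phi n x) i) (frag_of (idx i)))"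

lemma theta_carrier:
  assumes "idx ` Ix n \<subseteq> M"
  shows "theta n idx x \<in> carrier (free_Abelian_group M)"
  unfolding theta_def
proof (rule sum_closed_free_Abelian_group)
  fix i assume "i \<in> Ix n"
  then show "frag_cmul (snd (Phi n x) i) (frag_of (idx i)) \<in> carrier (free_Abelian_group M)"
    using assms keys_cmul[of "snd (Phi n x) i" "frag_of (idx i)"] by (auto simp: keys_frag_of)
qed

lemma theta_mult:
  assumes "x \<in> L2 n" "y \<in> L2 n"
  shows "theta n idx (x \<otimes>\<^bsub>VP n\<^esub> y) = theta n idx x + theta n idx y"
proof -
  interpret group "VP n" by (rule group_VP)
  have c: "x \<in> carrier (VP n)" "y \<in> carrier (VP n)" using assms lc2_sub by auto
  have "snd (Phi n (x \<otimes>\<^bsub>VP n\<^esub> y)) = snd (Phi n x) + snd (Phi n y)"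
    using c Phi_L2[OF assms(1)] by (simp add: Phi_mult cc_zero1)
  then show ?thesis
    by (simp add: theta_def frag_cmul_distrib sum.distrib)
qed

lemma theta_hom:
  assumes "idx ` Ix n \<subseteq> M"
  shows "theta n idx \<in> hom ((VP n)\<lparr>carrier := L2 n\<rparr>) (free_Abelian_group M)"
proof (rule homI)
  fix x show "theta n idx x \<in> carrier (free_Abelian_group M)" by (rule theta_carrier[OF assms])
next
  fix x y assume "x \<in> carrier ((VP n)\<lparr>carrier := L2 n\<rparr>)" "y \<in> carrier ((VP n)\<lparr>carrier := L2 n\<rparr>)"
  then show "theta n idx (x \<otimes>\<^bsub>(VP n)\<lparr>carrier := L2 n\<rparr>\<^esub> y) = theta n idx x \<otimes>\<^bsub>free_Abelian_group M\<^esub> theta n idx y"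
    using theta_mult[of x n y idx] by simp
qed

lemma theta_L3: "x \<in> L3 n \<Longrightarrow> theta n idx x = 0"
  by (simp add: theta_def Phi_L3)

definition cb :: "nat \<Rightarrow> ix \<Rightarrow> vp_letter list set" where
  "cb n i = commG (VP n) (lam n (fst (pr i))) (lam n (snd (pr i)))"

lemma pr_gens:
  assumes "i \<in> Ix n"
  shows "fst (pr i) \<in> gens n" "snd (pr i) \<in> gens n" "fst (pr i) \<noteq> snd (pr i)"
  using assms by (auto simp: Ix_def pr_def gens_def vp_gen_def split: if_splits)

lemma cb_L2: "i \<in> Ix n \<Longrightarrow> cb n i \<in> L2 n"
  using group.comm_in_lc2[OF group_VP] pr_gens[of i n] lam_carrier
  by (simp add: cb_def gens_def)

lemma Phi_cb: assumes "i \<in> Ix n" shows "Phi n (cb n i) = (0, dd i)"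
proof -
  note g = pr_gens[OF assms]
  have "Phi n (cb n i) = (0, cc n (dd (fst (pr i))) (dd (snd (pr i))) - cc n (dd (snd (pr i))) (dd (fst (pr i))))"
    unfolding cb_def using g
    by (simp add: Phi_commG lam_carrier Phi_lam gens_def del: mult_HH)
  also have "\<dots> = (0, dd i)" using g by (simp add: dd_gen_comm om_pr[OF assms])
  finally show ?thesis .
qed

lemma theta_cb:
  assumes "i \<in> Ix n"
  shows "theta n idx (cb n i) = frag_of (idx i)"
proof -
  have "(\<lambda>j. frag_cmul (snd (Phi n (cb n i)) j) (frag_of (idx j))) = (\<lambda>j. if j = i then frag_of (idx i) else 0)"
    by (auto simp: Phi_cb[OF assms] dd_def fun_eq_iff)
  then have "theta n idx (cb n i) = (\<Sum>j\<in>Ix n. if j = i then frag_of (idx i) else 0)"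
    unfolding theta_def by (simp only:)
  also have "\<dots> = frag_of (idx i)" using assms finite_Ix by simp
  finally show ?thesis .
qed


context group
begin

lemma commG_swap: "x \<in> carrier G \<Longrightarrow> y \<in> carrier G \<Longrightarrow> commG G x y = inv (commG G y x)"
  by (simp add: commG_def m_assoc inv_mult_group)

lemma commG_trivial:
  assumes "x \<in> carrier G" "y \<in> carrier G" "x \<otimes> y = y \<otimes> x"
  shows "commG G x y = \<one>"
proof -
  have "commG G x y = inv (y \<otimes> x) \<otimes> (x \<otimes> y)"
    using assms by (simp add: commG_def m_assoc inv_mult_group)
  then show ?thesis using assms by simp
qed

end

lemma basic_ex:
  assumes "(a1, a2) \<in> gens n" "(b1, b2) \<in> gens n" "(a1, a2) \<noteq> (b1, b2)"
    and "a1 = b1 \<or> a2 = b2 \<or> (a1 = b2 \<and> a2 = b1)"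
  shows "\<exists>i\<in>Ix n. pr i = ((a1, a2), (b1, b2)) \<or> pr i = ((b1, b2), (a1, a2))"
proof -
  have r: "1 \<le> a1" "a1 \<le> n" "1 \<le> a2" "a2 \<le> n" "a1 \<noteq> a2" "1 \<le> b1" "b1 \<le> n" "1 \<le> b2" "b2 \<le> n" "b1 \<noteq> b2"
    using assms(1,2) by (auto simp: gens_def vp_gen_def)
  consider "a1 = b2" "a2 = b1" | "a1 = b1" "a2 \<noteq> b2" | "a2 = b2" "a1 \<noteq> b1"
    using assms(3,4) by blast
  then show ?thesis
  proof cases
    case 1
    show ?thesis
    proof (cases "a1 < a2")
      case True
      then have "Inl (a1, a2) \<in> Ix n" "pr (Inl (a1, a2)) = ((a1, a2), (b1, b2))"
        using r 1 by (auto simp: Ix_def pr_def)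
      then show ?thesis by blast
    next
      case False
      then have "Inl (a2, a1) \<in> Ix n" "pr (Inl (a2, a1)) = ((b1, b2), (a1, a2))"
        using r 1 by (auto simp: Ix_def pr_def)
      then show ?thesis by blast
    qed
  next
    case 2
    show ?thesis
    proof (cases "a2 < b2")
      case True
      then have "Inr (a1, a2, b2) \<in> Ix n" "pr (Inr (a1, a2, b2)) = ((a1, a2), (b1, b2))"
        using r 2 by (auto simp: Ix_def pr_def)
      then show ?thesis by blast
    next
      case False
      then have "Inr (a1, b2, a2) \<in> Ix n" "pr (Inr (a1, b2, a2)) = ((b1, b2), (a1, a2))"
        using r 2 by (auto simp: Ix_def pr_def)
      then show ?thesis by blast
    qed
  next
    case 3
    show ?thesis
    proof (cases "b1 < a1")
      case True
      then have "Inr (a2, a1, b1) \<in> Ix n" "pr (Inr (a2, a1, b1)) = ((a1, a2), (b1, b2))"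
        using r 3 by (auto simp: Ix_def pr_def)
      then show ?thesis by blast
    next
      case False
      then have "Inr (a2, b1, a1) \<in> Ix n" "pr (Inr (a2, b1, a1)) = ((b1, b2), (a1, a2))"
        using r 3 by (auto simp: Ix_def pr_def)
      then show ?thesis by blast
    qed
  qed
qed

lemma stage1:
  assumes K: "subgroup K (VP n)"
    and nK: "\<And>g h. g \<in> carrier (VP n) \<Longrightarrow> h \<in> K \<Longrightarrow> g \<otimes>\<^bsub>VP n\<^esub> h \<otimes>\<^bsub>VP n\<^esub> inv\<^bsub>VP n\<^esub> g \<in> K"
    and B: "\<And>i. i \<in> Ix n \<Longrightarrow> cb n i \<in> K"
    and a: "(a1, a2) \<in> gens n" and b: "(b1, b2) \<in> gens n"
  shows "commG (VP n) (lam n (a1, a2)) (lam n (b1, b2)) \<in> K"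
proof -
  interpret group "VP n" by (rule group_VP)
  have lc: "\<And>x. x \<in> gens n \<Longrightarrow> lam n x \<in> carrier (VP n)" by (simp add: gens_def lam_carrier)
  have basic: "commG (VP n) (lam n (x1, x2)) (lam n (y1, y2)) \<in> K"
    if x: "(x1, x2) \<in> gens n" and y: "(y1, y2) \<in> gens n" and ne: "(x1, x2) \<noteq> (y1, y2)"
      and c: "x1 = y1 \<or> x2 = y2 \<or> (x1 = y2 \<and> x2 = y1)" for x1 x2 y1 y2
  proof -
    obtain i where i: "i \<in> Ix n" "pr i = ((x1, x2), (y1, y2)) \<or> pr i = ((y1, y2), (x1, x2))"
      using basic_ex[OF x y ne c] by blast
    show ?thesis
    proof (cases "pr i = ((x1, x2), (y1, y2))")
      case True then show ?thesis using B[OF i(1)] by (simp add: cb_def)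
    next
      case False
      then have "pr i = ((y1, y2), (x1, x2))" using i by blast
      then have "commG (VP n) (lam n (y1, y2)) (lam n (x1, x2)) \<in> K" using B[OF i(1)] by (simp add: cb_def)
      then show ?thesis
        using commG_swap[OF lc[OF x] lc[OF y]] subgroup.m_inv_closed[OF K] by simp
    qed
  qed
  have r: "1 \<le> a1" "a1 \<le> n" "1 \<le> a2" "a2 \<le> n" "a1 \<noteq> a2" "1 \<le> b1" "b1 \<le> n" "1 \<le> b2" "b2 \<le> n" "b1 \<noteq> b2"
    using a b by (auto simp: gens_def vp_gen_def)
  have path: "commG (VP n) (lam n (k, i)) (lam n (i, j)) \<in> K"
    if d: "distinct [i, j, k]" "{i, j, k} \<subseteq> {1..n}" for i j k
  proof -
    have g: "(k, i) \<in> gens n" "(k, j) \<in> gens n" "(i, j) \<in> gens n"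
      using d by (auto simp: gens_def vp_gen_def)
    show ?thesis
    proof (rule comm_path[OF K nK])
      show "lam n (k, i) \<otimes>\<^bsub>VP n\<^esub> lam n (k, j) \<otimes>\<^bsub>VP n\<^esub> lam n (i, j)
          = lam n (i, j) \<otimes>\<^bsub>VP n\<^esub> lam n (k, j) \<otimes>\<^bsub>VP n\<^esub> lam n (k, i)"
        by (rule lam_triple[OF d])
      show "commG (VP n) (lam n (k, i)) (lam n (k, j)) \<in> K"
        using basic[OF g(1) g(2)] d by simp
      show "commG (VP n) (lam n (k, j)) (lam n (i, j)) \<in> K"
        using basic[OF g(2) g(3)] d by simp
    qed (use lc g in auto)
  qed
  consider "(a1, a2) = (b1, b2)"
    | "(a1, a2) \<noteq> (b1, b2)" "a1 = b1 \<or> a2 = b2 \<or> (a1 = b2 \<and> a2 = b1)"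
    | "a2 = b1" "a1 \<noteq> b2"
    | "a1 = b2" "a2 \<noteq> b1"
    | "a1 \<noteq> b1" "a1 \<noteq> b2" "a2 \<noteq> b1" "a2 \<noteq> b2"
    by blast
  then show ?thesis
  proof cases
    case 1
    then show ?thesis using commG_trivial[OF lc[OF a] lc[OF a]] subgroup.one_closed[OF K] by simp
  next
    case 2 then show ?thesis using basic[OF a b] by blast
  next
    case 3
    then have "distinct [a2, b2, a1]" "{a2, b2, a1} \<subseteq> {1..n}" using r by auto
    then show ?thesis using path[of a2 b2 a1] 3 by simp
  next
    case 4
    then have d: "distinct [a1, a2, b1]" "{a1, a2, b1} \<subseteq> {1..n}" using r by auto
    have "commG (VP n) (lam n (b1, a1)) (lam n (a1, a2)) \<in> K" using path[OF d] .
    then show ?thesis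
      using 4 commG_swap[OF lc[OF a] lc[OF b]] subgroup.m_inv_closed[OF K] by simp
  next
    case 5
    then have "distinct [a1, a2, b1, b2]" "{a1, a2, b1, b2} \<subseteq> {1..n}" using r by auto
    then have "lam n (a1, a2) \<otimes>\<^bsub>VP n\<^esub> lam n (b1, b2) = lam n (b1, b2) \<otimes>\<^bsub>VP n\<^esub> lam n (a1, a2)"
      by (rule lam_comm)
    then show ?thesis using commG_trivial[OF lc[OF a] lc[OF b]] subgroup.one_closed[OF K] by simp
  qed
qed


lemma equalizer_subgroup:
  assumes "group_hom G H f" "group_hom G H g"
  shows "subgroup {x \<in> carrier G. f x = g x} G"
proof -
  interpret f: group_hom G H f by fact
  interpret g: group_hom G H g by fact
  show ?thesis
  proof (rule f.G.subgroupI)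
    show "{x \<in> carrier G. f x = g x} \<noteq> {}" using f.G.one_closed by force
  next
    fix a assume "a \<in> {x \<in> carrier G. f x = g x}"
    then show "inv\<^bsub>G\<^esub> a \<in> {x \<in> carrier G. f x = g x}" by simp
  next
    fix a b assume "a \<in> {x \<in> carrier G. f x = g x}" "b \<in> {x \<in> carrier G. f x = g x}"
    then show "a \<otimes>\<^bsub>G\<^esub> b \<in> {x \<in> carrier G. f x = g x}" by simp
  qed auto
qed

theorem main_iso:
  "((VP n)\<lparr>carrier := L2 n\<rparr> Mod L3 n) \<cong> free_Abelian_group {..< card (Ix n)}"
proof -
  interpret G: group "VP n" by (rule group_VP)
  define G2 where "G2 = (VP n)\<lparr>carrier := L2 n\<rparr>"
  define Q where "Q = G2 Mod L3 n"
  define M where "M = {..< card (Ix n)}"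
  define F where "F = free_Abelian_group M"
  obtain e where e: "bij_betw e {0..<card (Ix n)} (Ix n)"
    using ex_bij_betw_nat_finite[OF finite_Ix] by blast
  define idx where "idx = inv_into {0..<card (Ix n)} e"
  have e_idx: "\<And>i. i \<in> Ix n \<Longrightarrow> e (idx i) = i"
    using e by (simp add: idx_def bij_betw_inv_into_right)
  have idx_e: "\<And>j. j \<in> M \<Longrightarrow> idx (e j) = j"
    using e by (simp add: idx_def M_def bij_betw_inv_into_left atLeast0LessThan)
  have e_M: "\<And>j. j \<in> M \<Longrightarrow> e j \<in> Ix n"
    using e by (auto simp: M_def bij_betw_def atLeast0LessThan)
  have idx_M: "idx ` Ix n \<subseteq> M"
    using bij_betw_inv_into[OF e] by (auto simp: idx_def M_def bij_betw_def atLeast0LessThan)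
  have gG2: "group G2" unfolding G2_def by (rule G.group_G2)
  have gF: "group F" by (simp add: F_def)
  have thom: "theta n idx \<in> hom G2 F" unfolding G2_def F_def by (rule theta_hom[OF idx_M])
  have gh_theta: "group_hom G2 F (theta n idx)"
    unfolding group_hom_def group_hom_axioms_def using gG2 gF thom by simp
  have nQ: "L3 n \<lhd> G2" unfolding G2_def by (rule G.lc3_normal_G2)
  have cQ: "comm_group Q" unfolding Q_def G2_def by (rule G.comm_group_Q)
  have gQ: "group Q" using cQ by (simp add: comm_group_def)
  have carrQ: "\<And>x. x \<in> L2 n \<Longrightarrow> L3 n #>\<^bsub>VP n\<^esub> x \<in> carrier Q"
    unfolding Q_def G2_def by (auto simp: carrier_FactGroup G.r_coset_restrict)
  define f where "f j = L3 n #>\<^bsub>VP n\<^esub> cb n (e j)" for j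
  have fM: "f ` M \<subseteq> carrier Q" using carrQ cb_L2 e_M by (auto simp: f_def)
  obtain h where h: "h \<in> hom F Q" "\<And>j. j \<in> M \<Longrightarrow> h (frag_of j) = f j"
    using comm_group.free_Abelian_group_universal[OF cQ fM] unfolding F_def by blast
  have gh_h: "group_hom F Q h"
    unfolding group_hom_def group_hom_axioms_def using gF gQ h(1) by simp
  have pi_hom: "(\<lambda>x. L3 n #>\<^bsub>VP n\<^esub> x) \<in> hom G2 Q"
    using normal.r_coset_hom_Mod[OF nQ] unfolding Q_def G2_def by (simp add: G.r_coset_restrict)
  have comp_hom: "(h \<circ> theta n idx) \<in> hom G2 Q" by (rule hom_compose[OF thom h(1)])
  define K where "K = {x \<in> carrier G2. L3 n #>\<^bsub>VP n\<^esub> x = (h \<circ> theta n idx) x}"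
  have gh1: "group_hom G2 Q (\<lambda>x. L3 n #>\<^bsub>VP n\<^esub> x)"
    using pi_hom gG2 gQ by (simp add: group_hom_def group_hom_axioms_def)
  have gh2: "group_hom G2 Q (h \<circ> theta n idx)"
    using comp_hom gG2 gQ by (simp add: group_hom_def group_hom_axioms_def)
  have K_sub_G2: "subgroup K G2"
    using equalizer_subgroup[OF gh1 gh2] unfolding K_def by simp
  have K_sub: "subgroup K (VP n)"
    using G.incl_subgroup[OF G.lc2_subgroup] K_sub_G2 unfolding G2_def by blast
  have K_L2: "K \<subseteq> L2 n" by (auto simp: K_def G2_def)
  have h0: "h 0 = L3 n"
    using group_hom.hom_one[OF gh_h] by (simp add: F_def Q_def)
  have L3_K: "L3 n \<subseteq> K"
  proof
    fix x assume x: "x \<in> L3 n"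
    have x2: "x \<in> L2 n" using x G.lc3_sub2 by auto
    have "L3 n #>\<^bsub>VP n\<^esub> x = L3 n"
      by (rule subgroup.rcos_const[OF G.lc3_subgroup group_VP x])
    moreover have "theta n idx x = 0" by (rule theta_L3[OF x])
    ultimately show "x \<in> K" using x2 h0 by (simp add: K_def G2_def)
  qed
  have nK: "\<And>g y. g \<in> carrier (VP n) \<Longrightarrow> y \<in> K \<Longrightarrow> g \<otimes>\<^bsub>VP n\<^esub> y \<otimes>\<^bsub>VP n\<^esub> inv\<^bsub>VP n\<^esub> g \<in> K"
    by (rule G.K_normal[OF K_sub K_L2 L3_K])
  have B: "\<And>i. i \<in> Ix n \<Longrightarrow> cb n i \<in> K"
  proof -
    fix i assume i: "i \<in> Ix n"
    have "L3 n #>\<^bsub>VP n\<^esub> cb n i = f (idx i)" using e_idx[OF i] by (simp add: f_def)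
    also have "\<dots> = h (frag_of (idx i))" using h(2) idx_M i by auto
    also have "\<dots> = h (theta n idx (cb n i))" using theta_cb[OF i] by simp
    finally show "cb n i \<in> K" using cb_L2[OF i] by (simp add: K_def G2_def)
  qed
  have allc: "commG (VP n) x y \<in> K" if x: "x \<in> carrier (VP n)" and y: "y \<in> carrier (VP n)" for x y
  proof (rule G.comm_all_in[OF K_sub nK _ _ _ x y])
    show "carrier (VP n) \<subseteq> generate (VP n) (lam n ` gens n)"
      using VP_generated by (auto simp: gens_def)
    show "lam n ` gens n \<subseteq> carrier (VP n)" by (auto simp: gens_def lam_carrier)
    fix a b assume "a \<in> lam n ` gens n" "b \<in> lam n ` gens n"
    then obtain a1 a2 b1 b2 where "a = lam n (a1, a2)" "(a1, a2) \<in> gens n" "b = lam n (b1, b2)" "(b1, b2) \<in> gens n"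
      by auto
    then show "commG (VP n) a b \<in> K" using stage1[OF K_sub nK B] by simp
  qed
  have L2_K: "L2 n \<subseteq> K"
    unfolding G.lc2_eq by (rule G.generate_subgroup_incl[OF _ K_sub]) (auto intro: allc)
  have ker: "kernel G2 F (theta n idx) = L3 n"
  proof
    show "kernel G2 F (theta n idx) \<subseteq> L3 n"
    proof
      fix x assume "x \<in> kernel G2 F (theta n idx)"
      then have x: "x \<in> L2 n" "theta n idx x = 0" by (auto simp: kernel_def G2_def F_def)
      then have "x \<in> K" using L2_K by auto
      then have "L3 n #>\<^bsub>VP n\<^esub> x = L3 n" using x h0 by (simp add: K_def)
      moreover have "x \<in> L3 n #>\<^bsub>VP n\<^esub> x"
        using G.rcos_self[OF _ G.lc3_subgroup] x G.lc2_sub by auto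
      ultimately show "x \<in> L3 n" by simp
    qed
    show "L3 n \<subseteq> kernel G2 F (theta n idx)"
      using G.lc3_sub2 theta_L3 by (auto simp: kernel_def G2_def F_def)
  qed
  have surj: "theta n idx ` carrier G2 = carrier F"
  proof
    show "theta n idx ` carrier G2 \<subseteq> carrier F" using thom by (auto simp: hom_def)
    show "carrier F \<subseteq> theta n idx ` carrier G2"
    proof
      fix y assume "y \<in> carrier F"
      then have "Poly_Mapping.keys y \<subseteq> M" by (simp add: F_def)
      then show "y \<in> theta n idx ` carrier G2"
      proof (rule free_Abelian_group_induct[where P = "\<lambda>y. y \<in> theta n idx ` carrier G2"])
        have "theta n idx \<one>\<^bsub>G2\<^esub> = 0" using group_hom.hom_one[OF gh_theta] by (simp add: F_def)
        then show "0 \<in> theta n idx ` carrier G2" using monoid.one_closed[OF group.is_monoid[OF gG2]] by (metis image_eqI)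
      next
        fix a b assume ab: "Poly_Mapping.keys a \<subseteq> M" "Poly_Mapping.keys b \<subseteq> M"
          "a \<in> theta n idx ` carrier G2" "b \<in> theta n idx ` carrier G2"
        then obtain u v where uv: "u \<in> carrier G2" "v \<in> carrier G2" "a = theta n idx u" "b = theta n idx v"
          by blast
        have iv: "inv\<^bsub>G2\<^esub> v \<in> carrier G2" using group.inv_closed[OF gG2 uv(2)] .
        have uiv: "u \<otimes>\<^bsub>G2\<^esub> inv\<^bsub>G2\<^esub> v \<in> carrier G2" by (rule monoid.m_closed[OF group.is_monoid[OF gG2] uv(1) iv])
        have "theta n idx (u \<otimes>\<^bsub>G2\<^esub> inv\<^bsub>G2\<^esub> v) = a - b"
          using group_hom.hom_mult[OF gh_theta uv(1) iv] group_hom.hom_inv[OF gh_theta uv(2)] uv ab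
          by (simp add: F_def)
        then show "a - b \<in> theta n idx ` carrier G2" using uiv by (metis image_eqI)
      next
        fix j assume j: "j \<in> M"
        have "frag_of j = theta n idx (cb n (e j))" using theta_cb[OF e_M[OF j]] idx_e[OF j] by simp
        then show "frag_of j \<in> theta n idx ` carrier G2" using cb_L2[OF e_M[OF j]] by (simp add: G2_def)
      qed
    qed
  qed
  have "G2 Mod kernel G2 F (theta n idx) \<cong> F"
    by (rule group_hom.FactGroup_iso[OF gh_theta surj])
  then have "G2 Mod L3 n \<cong> F" by (simp only: ker)
  then show ?thesis by (simp only: G2_def F_def M_def)
qed


lemma card_D2:
  assumes "finite A"
  shows "card {(q, r). q \<in> A \<and> r \<in> A \<and> q \<noteq> r} = card A * (card A - 1)"
proof -
  have "{(q, r). q \<in> A \<and> r \<in> A \<and> q \<noteq> r} = Sigma A (\<lambda>q. A - {q})" by auto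
  then have "card {(q, r). q \<in> A \<and> r \<in> A \<and> q \<noteq> r} = (\<Sum>q\<in>A. card (A - {q}))"
    using assms by (simp add: card_SigmaI)
  also have "\<dots> = (\<Sum>q\<in>A. card A - 1)" using assms by (intro sum.cong) auto
  also have "\<dots> = card A * (card A - 1)" by simp
  finally show ?thesis .
qed

definition Lset :: "nat \<Rightarrow> (nat \<times> nat) set" where
  "Lset n = {(i, j). 1 \<le> i \<and> i < j \<and> j \<le> n}"

definition Tset :: "nat \<Rightarrow> (nat \<times> nat \<times> nat) set" where
  "Tset n = {(p, q, r). distinct [p, q, r] \<and> {p, q, r} \<subseteq> {1..n}}"

lemma card_Lset: "2 * card (Lset n) = n * (n - 1)"
proof -
  let ?D = "{(q, r). q \<in> {1..n} \<and> r \<in> {1..n} \<and> q \<noteq> r}"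
  let ?sw = "\<lambda>(i::nat, j::nat). (j, i)"
  have fin: "finite (Lset n)"
    by (rule finite_subset[of _ "{1..n} \<times> {1..n}"]) (auto simp: Lset_def)
  have D: "?D = Lset n \<union> ?sw ` Lset n" by (auto simp: Lset_def image_iff)
  have disj: "Lset n \<inter> ?sw ` Lset n = {}" by (auto simp: Lset_def)
  have inj: "inj_on ?sw (Lset n)" by (auto simp: inj_on_def)
  have "card ?D = card (Lset n) + card (?sw ` Lset n)"
    unfolding D using fin disj by (intro card_Un_disjoint) auto
  also have "\<dots> = 2 * card (Lset n)" using card_image[OF inj] by simp
  finally show ?thesis using card_D2[of "{1..n}"] by simp
qed

lemma Tset_eq: "Tset n = Sigma {1..n} (\<lambda>p. {(q, r). q \<in> {1..n} - {p} \<and> r \<in> {1..n} - {p} \<and> q \<noteq> r})"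
  unfolding Tset_def by (simp add: set_eq_iff) blast

lemma fin_Tset: "finite (Tset n)"
  unfolding Tset_eq
proof (rule finite_SigmaI)
  fix p show "finite {(q, r). q \<in> {1..n} - {p} \<and> r \<in> {1..n} - {p} \<and> q \<noteq> r}"
    by (rule finite_subset[of _ "{1..n} \<times> {1..n}"]) auto
qed simp

lemma card_Tset: "card (Tset n) = n * ((n - 1) * (n - 2))"
proof -
  note eq = Tset_eq[of n]
  have fin: "\<And>p. finite {(q, r). q \<in> {1..n} - {p} \<and> r \<in> {1..n} - {p} \<and> q \<noteq> r}"
    by (rule finite_subset[of _ "{1..n} \<times> {1..n}"]) auto
  have "card (Tset n) = (\<Sum>p\<in>{1..n}. card {(q, r). q \<in> {1..n} - {p} \<and> r \<in> {1..n} - {p} \<and> q \<noteq> r})"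
    unfolding eq using fin by (simp add: card_SigmaI)
  also have "\<dots> = (\<Sum>p\<in>{1..n}. (n - 1) * (n - 2))"
  proof (rule sum.cong)
    fix p assume p: "p \<in> {1..n}"
    have c: "card ({1..n} - {p}) = n - 1" using p by simp
    have "card {(q, r). q \<in> {1..n} - {p} \<and> r \<in> {1..n} - {p} \<and> q \<noteq> r}
        = card ({1..n} - {p}) * (card ({1..n} - {p}) - 1)" by (rule card_D2) simp
    also have "\<dots> = (n - 1) * (n - 1 - 1)" by (simp only: c)
    also have "\<dots> = (n - 1) * (n - 2)" by (simp only: diff_diff_left one_add_one)
    finally show "card {(q, r). q \<in> {1..n} - {p} \<and> r \<in> {1..n} - {p} \<and> q \<noteq> r} = (n - 1) * (n - 2)" .
  qed simp
  also have "\<dots> = n * ((n - 1) * (n - 2))" by simp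
  finally show ?thesis .
qed

lemma card_Ix: "card (Ix n) = card (Lset n) + card (Tset n)"
proof -
  have fin1: "finite (Lset n)"
    by (rule finite_subset[of _ "{1..n} \<times> {1..n}"]) (auto simp: Lset_def)
  note fin2 = fin_Tset[of n]
  have eq: "Ix n = Inl ` Lset n \<union> Inr ` Tset n" by (simp add: Ix_def Lset_def Tset_def)
  have "card (Ix n) = card (Inl ` Lset n :: ix set) + card (Inr ` Tset n :: ix set)"
    unfolding eq by (rule card_Un_disjoint[OF finite_imageI[OF fin1] finite_imageI[OF fin2]]) blast
  then show ?thesis by (simp add: card_image)
qed

lemma arith_formula:
  fixes n c :: nat
  assumes "n \<ge> 3" "n * (n - 1) = 2 * c"
  shows "c + n * (n - 1) * (n - 2) = n * (n - 1) * (2 * n - 3) div 2"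
proof -
  obtain k where k: "n = k + 3" using assms(1) by (metis add.commute le_iff_add)
  have e: "n * (n - 1) * (2 * n - 3) = 2 * (c * (2 * n - 3))" using assms(2) by (metis mult.assoc)
  have r: "n * (n - 1) * (2 * n - 3) div 2 = c * (2 * n - 3)" by (subst e) simp
  have "c + n * (n - 1) * (n - 2) = c + 2 * c * (n - 2)" using assms(2) by simp
  also have "\<dots> = c * (2 * n - 3)" unfolding k by (simp add: algebra_simps)
  finally show ?thesis using r by simp
qed

lemma card_Ix_formula:
  assumes "n \<ge> 3"
  shows "card (Ix n) = n * (n - 1) * (2 * n - 3) div 2"
proof -
  have "card (Ix n) = card (Lset n) + n * (n - 1) * (n - 2)"
    using card_Ix[of n] card_Tset[of n] by (simp only: mult.assoc)
  also have "\<dots> = n * (n - 1) * (2 * n - 3) div 2"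
    by (rule arith_formula[OF assms card_Lset[symmetric]])
  finally show ?thesis .
qed


theorem proposition5p7:
  fixes n :: nat
  assumes "n \<ge> 3"
  shows "((VP n)\<lparr>carrier := lower_central (VP n) 2\<rparr> Mod lower_central (VP n) 3)
           \<cong> free_Abelian_group {..< n * (n - 1) * (2 * n - 3) div 2}"
  using main_iso[of n] by (simp only: card_Ix_formula[OF assms])

end
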